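(* Let $(A,+,\circ)$ be a finite left brace whose additive group $(A,+)$ is cyclic, let $X$ be a transitive cycle base of $A$ and let $g\in X$. Then $g$ generates the additive group $(A,+)$.
   Context: A left brace is a set $A$ with two operations such that $(A,+)$ is an abelian group, $(A,\circ)$ is a group, and $a\circ(b+c)=a\circ b-a+a\circ c$ for all $a,b,c$. For $a\in A$, $\lambda_a(b):=-a+a\circ b$; $a\mapsto\lambda_a$ is a homomorphism $(A,\circ)\to\mathrm{Aut}(A,+)$, giving an action of $(A,\circ)$ on $A$. A transitive cycle base is a subset of $A$ which is a single orbit of this action and which generates $(A,+)$. *)

theory Defs
  imports Main
begin

text \<open>The brace is modelled on the whole of a type 'a of class ab_group_add
  (the additive group (A,+)); the second operation circ is an arbitrary binary operation.\<close>

definition is_group_op :: "('a \<Rightarrow> 'a \<Rightarrow> 'a) \<Rightarrow> bool" where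
  "is_group_op circ \<longleftrightarrow>
     (\<forall>a b c. circ (circ a b) c = circ a (circ b c)) \<and>
     (\<exists>e. (\<forall>a. circ e a = a \<and> circ a e = a) \<and> (\<forall>a. \<exists>b. circ a b = e \<and> circ b a = e))"

definition left_brace :: "('a::ab_group_add \<Rightarrow> 'a \<Rightarrow> 'a) \<Rightarrow> bool" where
  "left_brace circ \<longleftrightarrow> is_group_op circ \<and>
     (\<forall>a b c. circ a (b + c) = circ a b - a + circ a c)"

definition brace_lambda :: "('a::ab_group_add \<Rightarrow> 'a \<Rightarrow> 'a) \<Rightarrow> 'a \<Rightarrow> 'a \<Rightarrow> 'a" where
  "brace_lambda circ a b = - a + circ a b"

definition add_span :: "'a::ab_group_add set \<Rightarrow> 'a set" where
  "add_span S = \<Inter>{H. 0 \<in> H \<and> (\<forall>x\<in>H. \<forall>y\<in>H. x + y \<in> H) \<and> (\<forall>x\<in>H. - x \<in> H) \<and> S \<subseteq> H}"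

definition add_cyclic :: "'a::ab_group_add itself \<Rightarrow> bool" where
  "add_cyclic _ \<longleftrightarrow> (\<exists>g::'a. add_span {g} = UNIV)"

definition transitive_cycle_base :: "('a::ab_group_add \<Rightarrow> 'a \<Rightarrow> 'a) \<Rightarrow> 'a set \<Rightarrow> bool" where
  "transitive_cycle_base circ X \<longleftrightarrow>
     (\<exists>x. X = {brace_lambda circ a x | a. True}) \<and> add_span X = UNIV"

end

theory Submission
  imports Defs
begin

primrec nm :: "nat \<Rightarrow> 'a::ab_group_add \<Rightarrow> 'a" where
  "nm 0 g = 0"
| "nm (Suc n) g = g + nm n g"

lemma nm_add: "nm (n + m) g = nm n g + nm m g"
  by (induction n) (auto simp: algebra_simps)

lemma nm_plus: "nm n (a + b) = nm n a + nm n b"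
  by (induction n) (auto simp: algebra_simps)

lemma nm_minus: "nm n (- a) = - nm n a"
  by (induction n) (auto simp: algebra_simps)

lemma nm_diff: "nm n (a - b) = nm n a - nm n b"
  using nm_plus[of n a "-b"] nm_minus[of n b] by simp

lemma nm_mult: "nm n (nm k h) = nm (n * k) h"
  by (induction n) (auto simp: nm_add)

lemma nm_comm: "nm n (nm k h) = nm k (nm n h)"
  by (simp add: nm_mult mult.commute)

lemma span_char: "add_span {g} = {nm n g - nm m g | n m. True}"
proof
  let ?T = "{nm n g - nm m g | n m. True}"
  show "add_span {g} \<subseteq> ?T"
  proof -
    have c1: "0 \<in> ?T" by (rule CollectI, rule exI[of _ 0], rule exI[of _ 0]) simp
    have c2: "g \<in> ?T" by (rule CollectI, rule exI[of _ 1], rule exI[of _ 0]) simp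
    have c3: "x + y \<in> ?T" if hx: "x \<in> ?T" and hy: "y \<in> ?T" for x y
    proof -
      obtain n m where x: "x = nm n g - nm m g" using hx by blast
      obtain n' m' where y: "y = nm n' g - nm m' g" using hy by blast
      have "x + y = nm (n+n') g - nm (m+m') g"
        unfolding x y by (simp add: nm_add algebra_simps)
      then show ?thesis by blast
    qed
    have c4: "- x \<in> ?T" if hx: "x \<in> ?T" for x
    proof -
      obtain n m where x: "x = nm n g - nm m g" using hx by blast
      have "- x = nm m g - nm n g" unfolding x by simp
      then show ?thesis by blast
    qed
    show ?thesis unfolding add_span_def
      by (rule Inter_lower) (use c1 c2 c3 c4 in blast)
  qed
  show "?T \<subseteq> add_span {g}"
  proof (clarsimp simp: add_span_def)
    fix n m H
    assume H: "0 \<in> H" "\<forall>x\<in>H. \<forall>y\<in>H. x + y \<in> H" "\<forall>x\<in>H. - x \<in> H" "g \<in> H"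
    have "nm k g \<in> H" for k by (induction k) (use H in auto)
    then show "nm n g - nm m g \<in> H" using H
      by (metis diff_conv_add_uminus)
  qed
qed

lemma add_hom_nm:
  assumes add: "\<And>x y. \<phi> (x + y) = \<phi> x + \<phi> y"
  shows "\<phi> (nm n h) = nm n (\<phi> h)" "\<phi> (a - b) = \<phi> a - \<phi> b"
proof -
  have z: "\<phi> 0 = 0" using add[of 0 0] by simp
  show "\<phi> (nm n h) = nm n (\<phi> h)" by (induction n) (auto simp: z add)
  have "\<phi> b + \<phi> (- b) = 0" using add[of b "-b"] z by simp
  then have "\<phi> (- b) = - \<phi> b" by (simp add: add_eq_0_iff)
  then show "\<phi> (a - b) = \<phi> a - \<phi> b" using add[of a "-b"] by simp
qed

lemma cyclic_endo:
  fixes \<phi> :: "'a::ab_group_add \<Rightarrow> 'a" and h y :: 'a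
  assumes add: "\<And>x y. \<phi> (x + y) = \<phi> x + \<phi> y"
    and cyc: "add_span {h} = UNIV"
  shows "\<phi> y \<in> add_span {y}"
proof -
  have "y \<in> add_span {h}" using cyc by simp
  then obtain p q where y: "y = nm p h - nm q h" unfolding span_char by blast
  have "\<phi> h \<in> add_span {h}" using cyc by simp
  then obtain r s where ph: "\<phi> h = nm r h - nm s h" unfolding span_char by blast
  have "\<phi> y = \<phi> (nm p h) - \<phi> (nm q h)"
    unfolding y by (rule add_hom_nm(2)[of \<phi>, OF add])
  also have "\<dots> = nm p (\<phi> h) - nm q (\<phi> h)"
    using add_hom_nm(1)[of \<phi>, OF add] by metis
  also have "\<dots> = nm r (nm p h) - nm s (nm p h) - (nm r (nm q h) - nm s (nm q h))"
    unfolding ph nm_diff nm_comm[of p] nm_comm[of q] ..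
  also have "\<dots> = nm r y - nm s y"
    unfolding y nm_diff by (simp add: algebra_simps)
  finally show ?thesis unfolding span_char by blast
qed

lemma span_mono_sub:
  assumes "x \<in> add_span {y}" shows "add_span {x} \<subseteq> add_span {y}"
  using assms unfolding add_span_def by blast

theorem mainTheorem2:
  fixes circ :: "'a::{ab_group_add, finite} \<Rightarrow> 'a \<Rightarrow> 'a"
    and X :: "'a set" and g :: 'a
  assumes "left_brace circ"
    and "add_cyclic TYPE('a)"
    and "transitive_cycle_base circ X"
    and "g \<in> X"
  shows "add_span {g} = UNIV"
proof -
  have assoc: "\<And>a b c. circ (circ a b) c = circ a (circ b c)"
    and dist: "\<And>a b c. circ a (b + c) = circ a b - a + circ a c"
    using assms(1) unfolding left_brace_def is_group_op_def by blast+
  obtain e where e: "\<And>a. circ e a = a \<and> circ a e = a" and inv: "\<And>a. \<exists>b. circ a b = e \<and> circ b a = e"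
    using assms(1) unfolding left_brace_def is_group_op_def by blast
  obtain h :: 'a where h: "add_span {h} = UNIV" using assms(2) unfolding add_cyclic_def by blast
  obtain x where X: "X = {brace_lambda circ a x | a. True}" and sp: "add_span X = UNIV"
    using assms(3) unfolding transitive_cycle_base_def by blast
  have e0: "e = 0" using dist[of e 0 0] e[of 0] by simp
  have lam_add: "\<And>a y z. brace_lambda circ a (y + z) = brace_lambda circ a y + brace_lambda circ a z"
    unfolding brace_lambda_def using dist by (simp add: algebra_simps)
  have a0: "\<And>a. circ a 0 = a" using dist[of _ 0 0] by (simp add: algebra_simps)
  have aneg: "\<And>a b. circ a (- b) = a + a - circ a b"
  proof -
    fix a b
    have H: "circ a b - a + circ a (-b) = a" using dist[of a b "-b"] a0 by simp
    have "circ a (-b) = (circ a b - a + circ a (-b)) + a - circ a b" by (simp add: algebra_simps)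
    also have "\<dots> = a + a - circ a b" unfolding H ..
    finally show "circ a (- b) = a + a - circ a b" .
  qed
  have comp: "\<And>a b c. brace_lambda circ a (brace_lambda circ b c) = brace_lambda circ (circ a b) c"
  proof -
    fix a b c
    have "circ a (- b + circ b c) = circ a (- b) - a + circ a (circ b c)" by (rule dist)
    also have "\<dots> = a - circ a b + circ (circ a b) c" using aneg assoc by (simp add: algebra_simps)
    finally show "brace_lambda circ a (brace_lambda circ b c) = brace_lambda circ (circ a b) c"
      unfolding brace_lambda_def by (simp add: algebra_simps)
  qed
  have endo: "\<And>b y. brace_lambda circ b y \<in> add_span {y}"
  proof -
    fix b y show "brace_lambda circ b y \<in> add_span {y}" by (rule cyclic_endo[of "brace_lambda circ b", OF lam_add[of b] h])
  qed
  obtain a where g: "g = brace_lambda circ a x" using assms(4) X by blast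
  obtain a' where a': "circ a' a = e" using inv by blast
  have xg: "x = brace_lambda circ a' g"
    using g comp a' e0 e by (simp add: brace_lambda_def)
  have "x \<in> add_span {g}" using xg endo by simp
  hence "add_span {x} \<subseteq> add_span {g}" by (rule span_mono_sub)
  moreover have "X \<subseteq> add_span {x}"
    using X endo by blast
  hence "add_span X \<subseteq> add_span {x}"
    unfolding add_span_def by blast
  ultimately show ?thesis using sp by blast
qed

end
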